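(* Let $K=\mathbb{F}_{p^h}$, $p$ prime, and let $\sigma:K\to K$, $k\mapsto k^{p^r}$, for some $r\in\{1,\dots,h-1\}$; let $n=h/\gcd(r,h)$ be the order of $\sigma$ and $q=p^{\gcd(r,h)}$, so that $\mathrm{Fix}(\sigma)\cong\mathbb{F}_q$. (i) If $n\in\{2,3\}$, then $f(t)=t^n-a\in K[t;\sigma]$ is irreducible if and only if $a\in K\setminus\mathrm{Fix}(\sigma)$. (ii) If $n$ is a prime and $n\mid(q-1)$, then $f(t)=t^n-a\in K[t;\sigma]$ is irreducible if and only if $a\in K\setminus\mathrm{Fix}(\sigma)$. In both cases (i) and (ii), there are precisely $p^h-q$ irreducible polynomials in $K[t;\sigma]$ of the form $t^n-a$ with $a\in K$.
   Context: $K[t;\sigma]$ is the skew polynomial ring over $K$ with $tk=\sigma(k)t$. $\mathrm{Fix}(\sigma)=\{k\in K:\sigma(k)=k\}$. A polynomial is irreducible if it is not a unit and has no factorization $f=gh$ with $\deg g,\deg h<\deg f$. *)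

theory Defs
  imports "HOL-Computational_Algebra.Computational_Algebra"
begin

text \<open>Skew polynomial ring K[t;sigma]: elements are represented by their coefficient
sequences (type 'a poly, coefficient i = coefficient of t^i); addition is the usual one,
and multiplication is determined by t k = sigma(k) t, i.e.
(a t^i)(b t^j) = a sigma^i(b) t^(i+j).\<close>

definition skew_mult :: "('a::comm_ring_1 \<Rightarrow> 'a) \<Rightarrow> 'a poly \<Rightarrow> 'a poly \<Rightarrow> 'a poly" where
  "skew_mult \<sigma> f g = (\<Sum>i\<le>degree f. monom (coeff f i) i * map_poly (\<sigma> ^^ i) g)"

definition skew_unit :: "('a::comm_ring_1 \<Rightarrow> 'a) \<Rightarrow> 'a poly \<Rightarrow> bool" where
  "skew_unit \<sigma> f \<longleftrightarrow> (\<exists>g. skew_mult \<sigma> f g = 1 \<and> skew_mult \<sigma> g f = 1)"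

definition skew_irreducible :: "('a::comm_ring_1 \<Rightarrow> 'a) \<Rightarrow> 'a poly \<Rightarrow> bool" where
  "skew_irreducible \<sigma> f \<longleftrightarrow> \<not> skew_unit \<sigma> f \<and>
     \<not> (\<exists>g h. f = skew_mult \<sigma> g h \<and> degree g < degree f \<and> degree h < degree f)"

definition Fix :: "('a \<Rightarrow> 'a) \<Rightarrow> 'a set" where
  "Fix \<sigma> = {k. \<sigma> k = k}"

end

theory Submission
  imports Defs
begin


locale skewring =
  fixes \<sigma> :: "'a::field \<Rightarrow> 'a"
  assumes s_add: "\<sigma> (x + y) = \<sigma> x + \<sigma> y"
    and s_mult: "\<sigma> (x * y) = \<sigma> x * \<sigma> y"
    and s_one: "\<sigma> 1 = 1"
    and s_inj0: "\<sigma> x = 0 \<Longrightarrow> x = 0"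
begin

lemma s_zero: "\<sigma> 0 = 0"
proof -
  have "\<sigma> 0 + \<sigma> 0 = \<sigma> 0 + 0" using s_add[of 0 0] by simp
  then show ?thesis by (rule add_left_imp_eq)
qed

lemma si_zero: "(\<sigma> ^^ i) 0 = 0"
  by (induction i) (auto simp: s_zero)

lemma si_one: "(\<sigma> ^^ i) 1 = 1"
  by (induction i) (auto simp: s_one)

lemma si_add: "(\<sigma> ^^ i) (x + y) = (\<sigma> ^^ i) x + (\<sigma> ^^ i) y"
  by (induction i) (auto simp: s_add)

lemma si_mult: "(\<sigma> ^^ i) (x * y) = (\<sigma> ^^ i) x * (\<sigma> ^^ i) y"
  by (induction i) (auto simp: s_mult)

lemma si_inj0: "(\<sigma> ^^ i) x = 0 \<Longrightarrow> x = 0"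
  by (induction i) (auto dest: s_inj0)

lemma si_uminus: "(\<sigma> ^^ i) (- x) = - (\<sigma> ^^ i) x"
  using si_add[of i x "-x"] by (simp add: si_zero eq_neg_iff_add_eq_0 add.commute)

lemma s_uminus: "\<sigma> (- x) = - \<sigma> x"
  using si_uminus[of 1 x] by simp

lemma si_diff: "(\<sigma> ^^ i) (x - y) = (\<sigma> ^^ i) x - (\<sigma> ^^ i) y"
  using si_add[of i x "-y"] by (simp add: si_uminus)

lemma si_sum: "(\<sigma> ^^ i) (\<Sum>j\<in>A. F j) = (\<Sum>j\<in>A. (\<sigma> ^^ i) (F j))"
  by (induction A rule: infinite_finite_induct) (auto simp: si_zero si_add)

lemma si_comp: "(\<sigma> ^^ i) ((\<sigma> ^^ j) x) = (\<sigma> ^^ (i + j)) x"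
  by (simp add: funpow_add)

lemma coeff_map_si [simp]: "coeff (map_poly (\<sigma> ^^ i) p) n = (\<sigma> ^^ i) (coeff p n)"
  by (rule coeff_map_poly) (rule si_zero)

abbreviation sm where "sm \<equiv> skew_mult \<sigma>"

lemma coeff_sm: "coeff (sm f g) k = (\<Sum>i\<le>k. coeff f i * (\<sigma> ^^ i) (coeff g (k - i)))"
proof -
  have "coeff (sm f g) k = (\<Sum>i\<le>degree f. (if k < i then 0 else coeff f i * (\<sigma> ^^ i) (coeff g (k - i))))"
    unfolding skew_mult_def coeff_sum coeff_monom_mult
    by (intro sum.cong refl) (metis coeff_map_si)
  also have "\<dots> = (\<Sum>i\<le>max k (degree f). (if k < i then 0 else coeff f i * (\<sigma> ^^ i) (coeff g (k - i))))"
    by (rule sum.mono_neutral_left) (auto simp: coeff_eq_0)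
  also have "\<dots> = (\<Sum>i\<le>k. (if k < i then 0 else coeff f i * (\<sigma> ^^ i) (coeff g (k - i))))"
    by (rule sum.mono_neutral_right) auto
  also have "\<dots> = (\<Sum>i\<le>k. coeff f i * (\<sigma> ^^ i) (coeff g (k - i)))"
    by (rule sum.cong) auto
  finally show ?thesis .
qed

lemma sm_monom_left: "sm (monom c m) X = monom c m * map_poly (\<sigma> ^^ m) X"
proof (cases "c = 0")
  case True
  then show ?thesis by (simp add: skew_mult_def)
next
  case False
  have "{..m} = insert m {..<m}" by auto
  then show ?thesis unfolding skew_mult_def using False
    by (simp add: degree_monom_eq coeff_monom)
qed

lemma sm_add_left: "sm (f + f') g = sm f g + sm f' g"
  by (rule poly_eqI) (simp add: coeff_sm distrib_right sum.distrib)

lemma sm_smult_left: "sm (smult c f) g = smult c (sm f g)"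
  by (rule poly_eqI) (simp add: coeff_sm sum_distrib_left mult.assoc)

lemma sm_minus_left: "sm (- f) g = - sm f g"
  by (rule poly_eqI) (simp add: coeff_sm sum_negf)

lemma sm_diff_left: "sm (f - f') g = sm f g - sm f' g"
  using sm_add_left[of f "-f'" g] by (simp add: sm_minus_left)

lemma sm_zero_left [simp]: "sm 0 g = 0"
  by (rule poly_eqI) (simp add: coeff_sm)

lemma sm_zero_right [simp]: "sm f 0 = 0"
  by (rule poly_eqI) (simp add: coeff_sm si_zero)

lemma sm_sum_left: "sm (\<Sum>i\<in>A. F i) g = (\<Sum>i\<in>A. sm (F i) g)"
  by (induction A rule: infinite_finite_induct) (auto simp: sm_add_left)

lemma sm_const_left: "sm [:c:] g = smult c g"
proof -
  have "sm (monom c 0) g = monom c 0 * map_poly (\<sigma> ^^ 0) g"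
    by (rule sm_monom_left)
  then show ?thesis by (simp add: monom_0 id_def)
qed

lemma sm_one_left [simp]: "sm 1 g = g"
  using sm_const_left[of 1 g] by (simp add: one_pCons)

lemma coeff_sm_monom_right:
  "coeff (sm u (monom c m)) k = (if m \<le> k then coeff u (k - m) * (\<sigma> ^^ (k - m)) c else 0)"
proof -
  have "coeff (sm u (monom c m)) k = (\<Sum>i\<le>k. if i = k - m \<and> m \<le> k then coeff u i * (\<sigma> ^^ i) c else 0)"
    unfolding coeff_sm by (intro sum.cong refl) (auto simp: coeff_monom si_zero)
  also have "\<dots> = (if m \<le> k then coeff u (k - m) * (\<sigma> ^^ (k - m)) c else 0)"
    by (cases "m \<le> k") (simp_all add: sum.delta)
  finally show ?thesis .
qed

lemma coeff_sm_monom_left: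
  "coeff (sm (monom c m) u) k = (if m \<le> k then c * (\<sigma> ^^ m) (coeff u (k - m)) else 0)"
  by (simp add: sm_monom_left coeff_monom_mult)

lemma coeff_sm_high:
  assumes "k > degree f + degree g"
  shows "coeff (sm f g) k = 0"
  unfolding coeff_sm
proof (rule sum.neutral, intro ballI)
  fix i assume "i \<in> {..k}"
  then have "i > degree f \<or> k - i > degree g" using assms by auto
  then show "coeff f i * (\<sigma> ^^ i) (coeff g (k - i)) = 0"
    by (auto simp: coeff_eq_0 si_zero)
qed

lemma coeff_sm_top:
  "coeff (sm f g) (degree f + degree g) = lead_coeff f * (\<sigma> ^^ degree f) (lead_coeff g)"
proof -
  have "coeff (sm f g) (degree f + degree g) =
     (\<Sum>i\<le>degree f + degree g. if i = degree f then lead_coeff f * (\<sigma> ^^ degree f) (lead_coeff g) else 0)"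
    unfolding coeff_sm
  proof (intro sum.cong refl)
    fix i assume "i \<in> {..degree f + degree g}"
    show "coeff f i * (\<sigma> ^^ i) (coeff g (degree f + degree g - i)) =
      (if i = degree f then lead_coeff f * (\<sigma> ^^ degree f) (lead_coeff g) else 0)"
    proof (cases "i = degree f")
      case False
      then have "i > degree f \<or> degree f + degree g - i > degree g" by auto
      then show ?thesis using False by (auto simp: coeff_eq_0 si_zero)
    qed simp
  qed
  also have "\<dots> = lead_coeff f * (\<sigma> ^^ degree f) (lead_coeff g)"
    by (simp add: sum.delta)
  finally show ?thesis .
qed

lemma sm_nonzero:
  assumes "f \<noteq> 0" "g \<noteq> 0"
  shows "sm f g \<noteq> 0" "degree (sm f g) = degree f + degree g"
proof -
  have c: "coeff (sm f g) (degree f + degree g) \<noteq> 0"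
    using assms by (auto simp: coeff_sm_top dest: si_inj0)
  then show "sm f g \<noteq> 0" by auto
  show "degree (sm f g) = degree f + degree g"
  proof (rule antisym)
    show "degree (sm f g) \<le> degree f + degree g"
      by (rule degree_le) (auto intro: coeff_sm_high)
    show "degree f + degree g \<le> degree (sm f g)"
      using c by (rule le_degree)
  qed
qed

lemma sm_eq_0_iff: "sm f g = 0 \<longleftrightarrow> f = 0 \<or> g = 0"
  using sm_nonzero(1) by auto

lemma sm_assoc_monom: "sm (sm (monom c i) g) h = sm (monom c i) (sm g h)"
proof (rule poly_eqI)
  fix k
  show "coeff (sm (sm (monom c i) g) h) k = coeff (sm (monom c i) (sm g h)) k"
  proof (cases "i \<le> k")
    case False
    then show ?thesis
      by (simp add: coeff_sm coeff_sm_monom_left)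
  next
    case True
    have "coeff (sm (sm (monom c i) g) h) k =
      (\<Sum>j\<le>k. (if i \<le> j then c * (\<sigma> ^^ i) (coeff g (j - i)) else 0) * (\<sigma> ^^ j) (coeff h (k - j)))"
      by (simp only: coeff_sm[of "sm (monom c i) g" h] coeff_sm_monom_left)
    also have "\<dots> = (\<Sum>j\<in>{i..k}. c * (\<sigma> ^^ i) (coeff g (j - i)) * (\<sigma> ^^ j) (coeff h (k - j)))"
      by (rule sum.mono_neutral_cong_right) auto
    also have "\<dots> = (\<Sum>l\<le>k - i. c * (\<sigma> ^^ i) (coeff g l) * (\<sigma> ^^ (i + l)) (coeff h (k - i - l)))"
      by (rule sum.reindex_bij_witness[where i="\<lambda>l. l + i" and j="\<lambda>j. j - i"])
         (use True in \<open>auto simp: add.commute\<close>)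
    also have "\<dots> = c * (\<sigma> ^^ i) (\<Sum>l\<le>k - i. coeff g l * (\<sigma> ^^ l) (coeff h (k - i - l)))"
      by (simp add: si_sum si_mult si_comp sum_distrib_left mult.assoc)
    also have "\<dots> = coeff (sm (monom c i) (sm g h)) k"
      by (simp only: coeff_sm_monom_left True if_True coeff_sm[of g h] diff_diff_left)
    finally show ?thesis .
  qed
qed

lemma sm_as_sum: "sm f g = (\<Sum>i\<le>degree f. sm (monom (coeff f i) i) g)"
  unfolding skew_mult_def[of \<sigma> f g] by (simp add: sm_monom_left)

lemma sm_assoc: "sm (sm f g) h = sm f (sm g h)"
proof -
  have "sm (sm f g) h = (\<Sum>i\<le>degree f. sm (sm (monom (coeff f i) i) g) h)"
    by (subst sm_as_sum) (simp add: sm_sum_left)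
  also have "\<dots> = (\<Sum>i\<le>degree f. sm (monom (coeff f i) i) (sm g h))"
    by (simp add: sm_assoc_monom)
  also have "\<dots> = sm f (sm g h)"
    by (rule sm_as_sum[symmetric])
  finally show ?thesis .
qed

lemma sm_add_right: "sm f (g + g') = sm f g + sm f g'"
  by (rule poly_eqI) (simp add: coeff_sm si_add distrib_left sum.distrib)

lemma sm_diff_right: "sm f (g - g') = sm f g - sm f g'"
  by (rule poly_eqI) (simp add: coeff_sm si_diff right_diff_distrib sum_subtractf)

lemma coeff_sm_const_right: "coeff (sm u [:c:]) k = coeff u k * (\<sigma> ^^ k) c"
  using coeff_sm_monom_right[of u c 0 k] by (simp add: monom_0)

lemma coeff_sm_lin:
  "coeff (sm g [:c0, c1:]) k = (if k = 0 then 0 else coeff g (k - 1) * (\<sigma> ^^ (k - 1)) c1) + coeff g k * (\<sigma> ^^ k) c0"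
proof -
  have "[:c0, c1:] = monom c0 0 + monom c1 1"
    by (simp add: monom_0 monom_Suc)
  then have "coeff (sm g [:c0, c1:]) k = coeff (sm g (monom c0 0)) k + coeff (sm g (monom c1 1)) k"
    by (simp add: sm_add_right)
  then show ?thesis
    by (simp only: coeff_sm_monom_right) auto
qed

end

locale skewcyc = skewring +
  fixes n :: nat
  assumes n_prime: "prime n"
    and s_n: "(\<sigma> ^^ n) x = x"
begin

lemma n_ge2: "n \<ge> 2" using n_prime prime_ge_2_nat by blast

lemma fix_mult: "(\<sigma> ^^ m) a = a \<Longrightarrow> (\<sigma> ^^ (m * k)) a = a"
proof (induction k)
  case (Suc k)
  then show ?case by (simp add: funpow_add)
qed simp

lemma orbit_distinct_aux:
  assumes "\<sigma> a \<noteq> a" "i < j" "j < n" "(\<sigma> ^^ i) a = (\<sigma> ^^ j) a"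
  shows False
proof -
  define d where "d = j - i"
  have "(\<sigma> ^^ (n - i)) ((\<sigma> ^^ i) a) = (\<sigma> ^^ (n - i)) ((\<sigma> ^^ j) a)"
    using assms by simp
  moreover have "(\<sigma> ^^ (n - i)) ((\<sigma> ^^ i) a) = a"
  proof -
    have "n - i + i = n" using assms by simp
    then show ?thesis by (metis si_comp s_n)
  qed
  moreover have "(\<sigma> ^^ (n - i)) ((\<sigma> ^^ j) a) = (\<sigma> ^^ d) ((\<sigma> ^^ n) a)"
  proof -
    have "n - i + j = d + n" using assms by (simp add: d_def)
    then show ?thesis by (metis si_comp)
  qed
  ultimately have dfix: "(\<sigma> ^^ d) a = a" using s_n[of a] by simp
  have "d \<noteq> 0" "d < n" using assms by (auto simp: d_def)
  then have "coprime d n"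
    using n_prime by (metis coprime_commute prime_imp_coprime_nat nat_dvd_not_less neq0_conv)
  then have g1: "gcd d n = 1" by simp
  obtain x y where xy: "d * x = n * y + gcd d n"
    using bezout_nat[OF \<open>d \<noteq> 0\<close>] by blast
  have "(\<sigma> ^^ (d * x)) a = a" using fix_mult[OF dfix] .
  moreover have "(\<sigma> ^^ (n * y + 1)) a = \<sigma> ((\<sigma> ^^ (n * y)) a)"
    by (simp add: funpow_add)
  moreover have "(\<sigma> ^^ (n * y)) a = a" by (rule fix_mult) (rule s_n)
  ultimately have "\<sigma> a = a" using xy g1 by simp
  then show False using assms by simp
qed

lemma orbit_distinct:
  assumes "\<sigma> a \<noteq> a" "i < n" "j < n" "(\<sigma> ^^ i) a = (\<sigma> ^^ j) a"
  shows "i = j"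
  using orbit_distinct_aux[of a i j] orbit_distinct_aux[of a j i] assms
  by (metis linorder_neqE_nat)

lemma coeff_f: fixes a :: 'a shows "coeff (monom 1 n - [:a:]) k = (if k = n then 1 else 0) - (if k = 0 then a else 0)"
  by (simp add: coeff_monom coeff_pCons split: nat.split)

lemma f_props: fixes a :: 'a shows "monom 1 n - [:a:] \<noteq> 0" "degree (monom 1 n - [:a:]) = n"
proof -
  have c: "coeff (monom 1 n - [:a:]) n = 1" using n_ge2 by (subst coeff_f) simp
  then show "monom 1 n - [:a:] \<noteq> 0" proof (rule contrapos_pn) qed simp
  show "degree (monom 1 n - [:a:]) = n"
  proof (rule antisym)
    show "degree (monom 1 n - [:a:]) \<le> n"
      by (rule degree_le) (auto simp: coeff_pCons split: nat.split)
    show "n \<le> degree (monom 1 n - [:a:])" using c by (intro le_degree) simp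
  qed
qed

lemma irred:
  assumes a: "\<sigma> a \<noteq> a"
  shows "skew_irreducible \<sigma> (monom 1 n - [:a:])"
proof -
  define f where "f = monom 1 n - [:a:]"
  have f0: "f \<noteq> 0" and df: "degree f = n" unfolding f_def by (rule f_props(1), rule f_props(2))
  have a0: "a \<noteq> 0" using a s_zero by auto
  have nunit: "\<not> skew_unit \<sigma> f"
  proof
    assume "skew_unit \<sigma> f"
    then obtain g where g: "sm f g = 1" by (auto simp: skew_unit_def)
    then have "g \<noteq> 0" by auto
    then have "degree (sm f g) = n + degree g" using sm_nonzero(2)[OF f0] df by simp
    then show False using g n_ge2 by simp
  qed
  have nfac: "\<not> (\<exists>G H. f = sm G H \<and> degree G < degree f \<and> degree H < degree f)"
  proof
    assume "\<exists>G H. f = sm G H \<and> degree G < degree f \<and> degree H < degree f"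
    then obtain G H where fGH: "f = sm G H" and dG: "degree G < n" and dH: "degree H < n"
      using df by auto
    have G0: "G \<noteq> 0" and H0: "H \<noteq> 0" using fGH f0 by auto
    have "n = degree G + degree H" using sm_nonzero(2)[OF G0 H0] fGH df by simp
    then have dH1: "degree H \<ge> 1" using dG by simp
    define I where "I = {u. \<exists>s. u = sm s H}"
    have I_lm: "sm x u \<in> I" if "u \<in> I" for x u
      using that unfolding I_def by (auto simp: sm_assoc[symmetric])
    have I_diff: "u - v \<in> I" if "u \<in> I" "v \<in> I" for u v
      using that unfolding I_def by (auto simp: sm_diff_left[symmetric])
    have I_f: "sm x f \<in> I" for x
      unfolding I_def fGH by (auto simp: sm_assoc[symmetric])
    have I_const: "e = 0" if "[:e:] \<in> I" for e
    proof (rule ccontr)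
      assume e: "e \<noteq> 0"
      from that obtain s where s: "[:e:] = sm s H" by (auto simp: I_def)
      then have "s \<noteq> 0" using e by auto
      then have "degree [:e:] = degree s + degree H" using sm_nonzero(2)[OF _ H0] s by simp
      then show False using dH1 by simp
    qed
    have I_D: "sm u [:a:] \<in> I" if "u \<in> I" for u
    proof -
      have comm: "sm (monom 1 n) u = sm u (monom 1 n)"
        by (rule poly_eqI) (simp add: coeff_sm_monom_left coeff_sm_monom_right s_n si_one)
      have "sm u [:a:] = sm (monom 1 n) u - sm u f"
        by (simp add: comm f_def sm_diff_right)
      then show ?thesis using I_diff[OF I_lm[OF that] I_f] by simp
    qed
    have H_I: "H \<in> I" unfolding I_def by (auto intro: exI[of _ 1])
    have main: "\<And>u. u \<in> I \<Longrightarrow> u \<noteq> 0 \<Longrightarrow> degree u < n \<Longrightarrow> card {k. coeff u k \<noteq> 0} = m \<Longrightarrow> False" for m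
    proof (induction m rule: less_induct)
      case (less m u)
      define S where "S = {k. coeff u k \<noteq> 0}"
      define i where "i = degree u"
      have finS: "finite S"
        by (rule finite_subset[of _ "{..degree u}"]) (auto simp: S_def intro: le_degree)
      have iS: "i \<in> S" using less.prems by (simp add: S_def i_def)
      show False
      proof (cases "S = {i}")
        case True
        define c where "c = coeff u i"
        have c0: "c \<noteq> 0" using iS by (simp add: S_def c_def)
        have u_eq: "u = monom c i"
        proof (rule poly_eqI)
          fix k show "coeff u k = coeff (monom c i) k"
            using True by (cases "k = i") (auto simp: S_def c_def coeff_monom)
        qed
        define e where "e = (\<sigma> ^^ (n - i)) c"
        have e0: "e \<noteq> 0" using c0 si_inj0 by (auto simp: e_def)
        have in_n: "i < n" using less.prems by (simp add: i_def)
        have v: "sm (monom 1 (n - i)) u - sm [:e:] f = [:e * a:]"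
        proof (rule poly_eqI)
          fix k
          show "coeff (sm (monom 1 (n - i)) u - sm [:e:] f) k = coeff [:e * a:] k"
            using in_n n_ge2
            by (auto simp: u_eq coeff_sm_monom_left sm_const_left coeff_monom f_def coeff_f
                e_def coeff_pCons si_zero split: nat.split)
        qed
        have "[:e * a:] \<in> I"
          using I_diff[OF I_lm[OF less.prems(1)] I_f] v by metis
        then have "e * a = 0" by (rule I_const)
        then show False using e0 a0 by simp
      next
        case False
        then obtain j where jS: "j \<in> S" and ji: "j \<noteq> i" using iS by blast
        define w where "w = sm u [:a:] - sm [:(\<sigma> ^^ i) a:] u"
        have wI: "w \<in> I" unfolding w_def
          by (rule I_diff[OF I_D[OF less.prems(1)] I_lm[OF less.prems(1)]])
        have cw: "coeff w k = coeff u k * ((\<sigma> ^^ k) a - (\<sigma> ^^ i) a)" for k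
          by (simp add: w_def coeff_sm_const_right sm_const_left algebra_simps)
        have jn: "j < n" "i < n" using jS less.prems(3) le_degree[of u j]
          by (auto simp: S_def i_def)
        have Sw: "{k. coeff w k \<noteq> 0} \<subseteq> S - {i}"
          by (auto simp: cw S_def)
        have jw: "j \<in> {k. coeff w k \<noteq> 0}"
          using jS orbit_distinct[OF a jn(2) jn(1)] ji by (auto simp: cw S_def)
        have "card {k. coeff w k \<noteq> 0} \<le> card (S - {i})"
          by (rule card_mono) (use finS Sw in auto)
        also have "\<dots> < card S" using finS iS by (metis card_Diff1_less)
        finally have lt: "card {k. coeff w k \<noteq> 0} < m" using less.prems(4) by (simp add: S_def)
        have w0: "w \<noteq> 0" using jw by auto
        have dw: "degree w < n"
        proof -
          have "degree w \<le> degree u"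
            by (rule degree_le) (auto simp: cw coeff_eq_0)
          then show ?thesis using less.prems(3) by simp
        qed
        show False using less.IH[OF lt wI w0 dw refl] .
      qed
    qed
    show False using main[OF H_I H0 dH refl] .
  qed
  show ?thesis unfolding skew_irreducible_def f_def[symmetric] using nunit nfac by blast
qed

lemma reducible:
  fixes b :: 'a
  assumes ab: "a = (\<Prod>i<n. (\<sigma> ^^ i) b)"
  shows "\<not> skew_irreducible \<sigma> (monom 1 n - [:a:])"
proof -
  define d where "d j = (\<Prod>i\<in>{Suc j..<n}. (\<sigma> ^^ i) b)" for j
  define g where "g = (\<Sum>j<n. monom (d j) j)"
  have cg: "coeff g k = (if k < n then d k else 0)" for k
    by (simp add: g_def coeff_sum coeff_monom)
  have a_eq: "a = b * d 0"
  proof -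
    have "{..<n} = insert 0 {Suc 0..<n}" using n_ge2 by auto
    then show ?thesis using ab by (simp add: d_def)
  qed
  have fac: "monom 1 n - [:a:] = sm g [:-b, 1:]"
  proof (rule poly_eqI)
    fix k
    show "coeff (monom 1 n - [:a:]) k = coeff (sm g [:-b, 1:]) k"
    proof (cases k)
      case 0
      then show ?thesis using n_ge2 a_eq by (simp add: coeff_f coeff_sm_lin cg si_uminus)
    next
      case (Suc m)
      consider "Suc m < n" | "Suc m = n" | "Suc m > n" by linarith
      then show ?thesis
      proof cases
        case 1
        have "d m = (\<sigma> ^^ Suc m) b * d (Suc m)"
          unfolding d_def using 1 by (simp add: prod.atLeast_Suc_lessThan)
        then show ?thesis using 1 Suc by (simp add: coeff_f coeff_sm_lin cg si_uminus si_one s_uminus)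
      next
        case 2
        have "coeff [:a:] n = 0" using n_ge2 by (simp add: coeff_pCons split: nat.split)
        then show ?thesis using Suc 2 by (simp add: coeff_f coeff_sm_lin cg si_uminus si_one d_def)
      next
        case 3
        then show ?thesis using Suc by (simp add: coeff_f coeff_sm_lin cg)
      qed
    qed
  qed
  have dg: "degree g < n"
  proof -
    have "degree g \<le> n - 1" by (rule degree_le) (auto simp: cg)
    then show ?thesis using n_ge2 by simp
  qed
  have dh: "degree [:-b, 1:] < n" using n_ge2 by simp
  show ?thesis
    unfolding skew_irreducible_def using fac dg dh f_props(2)[of a] by metis
qed

end


lemma ff_pow_card:
  fixes x :: "'a::{field,finite}"
  shows "x ^ card (UNIV :: 'a set) = x"
proof (cases "x = 0")
  case False
  have "x * (\<Prod>y\<in>UNIV-{0}. x * y) = x * x ^ (card (UNIV :: 'a set) - 1) * \<Prod>(UNIV-{0})"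
    by (simp add: prod.distrib mult_ac)
  also have "x * x ^ (card (UNIV :: 'a set) - 1) = x ^ Suc (card (UNIV :: 'a set) - 1)"
    by (subst power_Suc) auto
  also have "Suc (card (UNIV :: 'a set) - 1) = card (UNIV :: 'a set)"
    using finite_UNIV_card_ge_0[where ?'a = 'a] by simp
  also have "(\<Prod>y\<in>UNIV-{0}. x * y) = (\<Prod>y\<in>UNIV-{0}. y)"
    by (rule prod.reindex_bij_witness[of _ "\<lambda>y. y / x" "\<lambda>y. x * y"]) (use False in auto)
  finally show ?thesis
    by simp
qed (use finite_UNIV_card_ge_0[where ?'a = 'a] in auto)

lemma ff_pow_card_iter:
  fixes x :: "'a::{field,finite}"
  shows "x ^ (card (UNIV :: 'a set) ^ m) = x"
  by (induction m) (simp_all add: ff_pow_card power_mult)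

lemma char_dvd_card: "CHAR('a::{field,finite}) dvd card (UNIV :: 'a set)"
proof -
  define c where "c = CHAR('a)"
  have c0: "c > 0" unfolding c_def by (rule finite_imp_CHAR_pos) simp
  define H where "H = range (of_nat :: nat \<Rightarrow> 'a)"
  have ofc: "(of_nat (c * m) :: 'a) = 0" for m by (simp add: c_def of_nat_eq_0_iff_char_dvd)
  have H_eq: "H = of_nat ` {..<c}"
  proof -
    have "(of_nat k :: 'a) = of_nat (k mod c)" for k
    proof -
      have "(of_nat k :: 'a) = of_nat (k mod c) + of_nat (c * (k div c))"
        by (metis mod_mult_div_eq of_nat_add add.commute)
      then show ?thesis using ofc by simp
    qed
    then have "(of_nat k :: 'a) \<in> of_nat ` {..<c}" for k
      using c0 by (metis imageI lessThan_iff mod_less_divisor)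
    then show ?thesis unfolding H_def by auto
  qed
  have cardH: "card H = c"
  proof -
    have "inj_on (of_nat :: nat \<Rightarrow> 'a) {..<c}"
    proof (rule inj_onI)
      fix i j assume ij: "i \<in> {..<c}" "j \<in> {..<c}" "(of_nat i :: 'a) = of_nat j"
      show "i = j"
      proof (rule ccontr)
        assume "i \<noteq> j"
        then consider "i < j" | "j < i" by linarith
        then show False
        proof cases
          case 1
          then have "c dvd j - i" using ij of_nat_eq_iff_char_dvd[OF 1, where 'a='a] by (simp add: c_def)
          then show False using 1 ij by (auto dest: dvd_imp_le)
        next
          case 2
          then have "c dvd i - j" using ij of_nat_eq_iff_char_dvd[OF 2, where 'a='a] by (simp add: c_def)
          then show False using 2 ij by (auto dest: dvd_imp_le)
        qed
      qed
    qed
    then show ?thesis by (simp add: H_eq card_image)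
  qed
  have H_add: "u + v \<in> H" if "u \<in> H" "v \<in> H" for u v
    using that unfolding H_def by (auto simp flip: of_nat_add)
  have H_neg: "- u \<in> H" if uH: "u \<in> H" for u
  proof -
    obtain k where k: "u = of_nat k" using uH by (auto simp: H_def)
    have "(of_nat (c * k - k) :: 'a) + of_nat k = of_nat (c * k)"
      using c0 by (simp flip: of_nat_add)
    then have "(of_nat (c * k - k) :: 'a) + of_nat k = 0" using ofc[of k] by simp
    then have "- u = of_nat (c * k - k)" using k by (metis add_eq_0_iff2 minus_minus)
    then show ?thesis by (simp add: H_def)
  qed
  have H0: "0 \<in> H" unfolding H_def by (metis rangeI of_nat_0)
  define C where "C x = (\<lambda>h. x + h) ` H" for x
  have cardC: "card (C x) = c" for x
    unfolding C_def using cardH by (simp add: card_image)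
  have Csub: "C y \<subseteq> C x" if zz: "z \<in> C x" "z \<in> C y" for x y z
  proof
    fix w assume "w \<in> C y"
    then obtain h where h: "h \<in> H" "w = y + h" by (auto simp: C_def)
    obtain h1 h2 where "h1 \<in> H" "h2 \<in> H" "z = x + h1" "z = y + h2"
      using zz by (auto simp: C_def)
    then have "w = x + (h1 + (- h2 + h))" "h1 + (- h2 + h) \<in> H"
      using h by (simp add: algebra_simps, metis H_add H_neg)
    then show "w \<in> C x" by (auto simp: C_def)
  qed
  have "c * card (range C) = card (\<Union>(range C))"
  proof (rule card_partition)
    show "finite (range C)" by simp
    show "finite (\<Union>(range C))" by simp
    show "\<And>X. X \<in> range C \<Longrightarrow> card X = c" using cardC by auto
    show "\<And>c1 c2. c1 \<in> range C \<Longrightarrow> c2 \<in> range C \<Longrightarrow> c1 \<noteq> c2 \<Longrightarrow> c1 \<inter> c2 = {}"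
      using Csub by (auto intro!: equalityI)
  qed
  moreover have "\<Union>(range C) = UNIV"
  proof -
    have "x \<in> C x" for x using H0 by (force simp: C_def)
    then show ?thesis by auto
  qed
  ultimately show ?thesis by (metis c_def dvd_triv_left)
qed

lemma ff_char:
  assumes "prime p" "card (UNIV :: 'a::{field,finite} set) = p ^ h"
  shows "CHAR('a) = p"
proof -
  have pos: "CHAR('a) > 0" by (rule finite_imp_CHAR_pos) simp
  have pr: "prime CHAR('a)" using prime_CHAR_semidom[OF pos] .
  have "CHAR('a) dvd p ^ h" using char_dvd_card[where 'a='a] assms(2) by simp
  then have "CHAR('a) dvd p" using pr prime_dvd_power by blast
  then show ?thesis using primes_dvd_imp_eq[OF pr assms(1)] by simp
qed

lemma frob_add:
  fixes x y :: "'b::comm_ring_1"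
  assumes "prime CHAR('b)"
  shows "(x + y) ^ (CHAR('b) ^ m) = x ^ (CHAR('b) ^ m) + y ^ (CHAR('b) ^ m)"
  by (rule freshmans_dream') (use assms in auto)

lemma frob_diff:
  fixes x y :: "'b::comm_ring_1"
  assumes "prime CHAR('b)"
  shows "(x - y) ^ (CHAR('b) ^ m) = x ^ (CHAR('b) ^ m) - y ^ (CHAR('b) ^ m)"
proof -
  have "x ^ (CHAR('b) ^ m) = ((x - y) + y) ^ (CHAR('b) ^ m)" by simp
  also have "\<dots> = (x - y) ^ (CHAR('b) ^ m) + y ^ (CHAR('b) ^ m)" by (rule frob_add[OF assms])
  finally show ?thesis by (simp add: algebra_simps)
qed

lemma pow_fix_iter:
  fixes x :: "'b::comm_ring_1"
  assumes "x ^ (p ^ e) = x"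
  shows "x ^ (p ^ (e * m)) = x"
proof (induction m)
  case (Suc m)
  have "x ^ (p ^ (e * Suc m)) = (x ^ (p ^ (e * m))) ^ (p ^ e)"
    by (simp only: mult_Suc_right power_add power_mult[symmetric] mult.commute)
  then show ?case using Suc assms by simp
qed simp

lemma geom_nat: "(q - 1) * (\<Sum>j<m. q ^ j) + 1 = (q::nat) ^ m" if q1: "q \<ge> 1"
proof -
  obtain q0 where q: "q = Suc q0" using q1 by (cases q) simp_all
  show ?thesis unfolding q by (induction m) (simp_all add: algebra_simps)
qed

lemma deg_mx:
  assumes "k \<ge> 2"
  shows "(monom 1 k - monom 1 1 :: 'b::field poly) \<noteq> 0" "degree (monom 1 k - monom 1 1 :: 'b::field poly) = k"
proof -
  have c: "coeff (monom 1 k - monom 1 1 :: 'b poly) k = 1" using assms by (simp add: coeff_monom)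
  show "(monom 1 k - monom 1 1 :: 'b::field poly) \<noteq> 0"
  proof
    assume "(monom 1 k - monom 1 1 :: 'b::field poly) = 0"
    then have "coeff (monom 1 k - monom 1 1 :: 'b poly) k = 0" by simp
    with c show False by simp
  qed
  show "degree (monom 1 k - monom 1 1 :: 'b::field poly) = k"
  proof (rule antisym)
    show "degree (monom 1 k - monom 1 1 :: 'b poly) \<le> k"
      by (rule degree_diff_le) (use assms in \<open>auto simp: degree_monom_le intro: order.trans[OF degree_monom_le]\<close>)
    show "k \<le> degree (monom 1 k - monom 1 1 :: 'b poly)" using c by (intro le_degree) simp
  qed
qed

lemma card_fixq:
  fixes p h g n :: nat
  assumes p: "prime p" and card: "card (UNIV :: 'a::{field,finite} set) = p ^ h"
    and hg: "h = g * n" and g1: "g \<ge> 1" and n1: "n \<ge> 1"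
  shows "card {x::'a. x ^ (p ^ g) = x} = p ^ g"
proof -
  define q where "q = p ^ g"
  define Q where "Q = p ^ h"
  have chp: "CHAR('a poly) = p" using ff_char[OF p card] by simp
  have prc: "prime CHAR('a poly)" using chp p by simp
  have p2: "p \<ge> 2" using p prime_ge_2_nat by blast
  have q2: "q \<ge> 2"
  proof -
    have "p ^ 1 \<le> p ^ g" using g1 p2 by (intro power_increasing) auto
    then show ?thesis using p2 by (simp add: q_def)
  qed
  have Qq: "Q = q ^ n" by (simp add: Q_def q_def hg power_mult)
  have qQ: "q \<le> Q"
  proof -
    have "q ^ 1 \<le> q ^ n" using n1 q2 by (intro power_increasing) auto
    then show ?thesis by (simp add: Qq)
  qed
  define X where "X = (monom 1 1 :: 'a poly)"
  define A where "A = monom 1 q - X"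
  define R where "R = (\<Sum>j<n. A ^ (q ^ j - 1))"
  define F where "F j = (monom 1 (q ^ j) :: 'a poly)" for j
  have Apow: "A ^ (q ^ j) = F (Suc j) - F j" for j
  proof -
    have "q ^ j = CHAR('a poly) ^ (g * j)" using ff_char[OF p card] by (simp add: q_def power_mult)
    then have "A ^ (q ^ j) = (monom 1 q) ^ (q ^ j) - X ^ (q ^ j)"
      unfolding A_def by (simp only: frob_diff[OF prc])
    then show ?thesis by (simp add: F_def X_def monom_power)
  qed
  have AR: "A * R = monom 1 Q - X"
  proof -
    have "A * R = (\<Sum>j<n. A * A ^ (q ^ j - 1))" by (simp add: R_def sum_distrib_left)
    also have "\<dots> = (\<Sum>j<n. A ^ (q ^ j))"
    proof (intro sum.cong refl)
      fix j
      have "q ^ j \<ge> 1" using q2 by simp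
      then have "Suc (q ^ j - 1) = q ^ j" by simp
      then show "A * A ^ (q ^ j - 1) = A ^ (q ^ j)" by (metis power_Suc)
    qed
    also have "\<dots> = (\<Sum>j<n. F (Suc j) - F j)" by (simp add: Apow)
    also have "\<dots> = F n - F 0" by (rule sum_lessThan_telescope)
    finally show ?thesis by (simp add: F_def X_def Qq)
  qed
  have A0: "A \<noteq> 0" and dA: "degree A = q" using deg_mx[OF q2] by (simp_all add: A_def X_def)
  have Q2: "Q \<ge> 2" using q2 qQ by simp
  have B0: "monom 1 Q - X \<noteq> 0" and dB: "degree (monom 1 Q - X) = Q"
    using deg_mx[OF Q2] by (simp_all add: X_def)
  have R0: "R \<noteq> 0" using AR B0 by auto
  have dR: "degree R = Q - q" using degree_mult_eq[OF A0 R0] AR dB dA by simp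
  have pA: "poly A x = x ^ q - x" for x by (simp add: A_def X_def poly_monom)
  have roots: "poly A x = 0 \<or> poly R x = 0" for x
  proof -
    have "poly (A * R) x = x ^ Q - x" by (simp add: AR X_def poly_monom)
    also have "\<dots> = 0" using ff_pow_card[of x] card by (simp add: Q_def)
    finally show ?thesis by simp
  qed
  have "UNIV = {x. poly A x = 0} \<union> {x. poly R x = 0}" using roots by auto
  then have "Q \<le> card {x. poly A x = 0} + card {x. poly R x = 0}"
    using card_Un_le[of "{x. poly A x = 0}" "{x. poly R x = 0}"] card by (simp add: Q_def)
  moreover have "card {x. poly R x = 0} \<le> Q - q" using card_poly_roots_bound[OF R0] dR by simp
  moreover have "card {x. poly A x = 0} \<le> q" using card_poly_roots_bound[OF A0] dA by simp
  ultimately have "card {x. poly A x = 0} = q" using qQ by linarith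
  moreover have "{x. poly A x = 0} = {x. x ^ q = x}" by (auto simp: pA)
  ultimately show ?thesis by (simp add: q_def)
qed



lemma fix_r_eq_g:
  fixes p h r :: nat
  assumes p: "prime p" and card: "card (UNIV :: 'a::{field,finite} set) = p ^ h" and r1: "r \<ge> 1"
  shows "{x::'a. x ^ (p ^ r) = x} = {x. x ^ (p ^ gcd r h) = x}"
proof (intro set_eqI iffI; simp)
  fix x :: 'a
  assume x: "x ^ (p ^ r) = x"
  obtain u v where uv: "r * u = h * v + gcd r h" using bezout_nat[of r h] r1 by auto
  have xh: "x ^ (p ^ h) = x" using ff_pow_card[of x] card by simp
  have "x ^ (p ^ (r * u)) = x" by (rule pow_fix_iter[OF x])
  moreover have "x ^ (p ^ (h * v + gcd r h)) = (x ^ (p ^ (h * v))) ^ (p ^ gcd r h)"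
    by (simp add: power_add power_mult)
  moreover have "x ^ (p ^ (h * v)) = x" by (rule pow_fix_iter[OF xh])
  ultimately show "x ^ (p ^ gcd r h) = x" using uv by simp
next
  fix x :: 'a
  assume x: "x ^ (p ^ gcd r h) = x"
  have "x ^ (p ^ (gcd r h * (r div gcd r h))) = x" by (rule pow_fix_iter[OF x])
  then show "x ^ (p ^ r) = x" by simp
qed

lemma pow_mod_exp:
  fixes x :: "'b::comm_ring_1"
  assumes "x ^ (q ^ n) = x"
  shows "x ^ (q ^ m) = x ^ (q ^ (m mod n))"
proof -
  have "q ^ m = q ^ (n * (m div n)) * q ^ (m mod n)"
    by (metis div_mult_mod_eq power_add mult.commute)
  then have "x ^ (q ^ m) = (x ^ (q ^ (n * (m div n)))) ^ (q ^ (m mod n))"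
    by (simp add: power_mult)
  also have "x ^ (q ^ (n * (m div n))) = x" by (rule pow_fix_iter[OF assms])
  finally show ?thesis .
qed

lemma norm_pow:
  fixes p h g n r' :: nat and b :: "'a::{field,finite}"
  assumes card: "card (UNIV :: 'a set) = p ^ h" and hg: "h = g * n"
    and cop: "coprime r' n" and n1: "n \<ge> 1"
  shows "(\<Prod>i<n. b ^ (p ^ (g * r' * i))) = b ^ (\<Sum>j<n. (p ^ g) ^ j)"
proof -
  define q where "q = p ^ g"
  have bq: "b ^ (q ^ n) = b" using ff_pow_card[of b] card by (simp add: q_def hg power_mult)
  have "(\<Prod>i<n. b ^ (p ^ (g * r' * i))) = (\<Prod>i<n. b ^ (q ^ ((r' * i) mod n)))"
  proof (intro prod.cong refl)
    fix i
    have "p ^ (g * r' * i) = q ^ (r' * i)" by (simp add: q_def power_mult mult.assoc)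
    then show "b ^ (p ^ (g * r' * i)) = b ^ (q ^ ((r' * i) mod n))"
      using pow_mod_exp[OF bq] by simp
  qed
  also have "\<dots> = (\<Prod>j<n. b ^ (q ^ j))"
  proof (rule prod.reindex_bij_betw)
    have inj: "inj_on (\<lambda>i. (r' * i) mod n) {..<n}"
    proof (rule inj_onI)
      fix i j assume ij: "i \<in> {..<n}" "j \<in> {..<n}" "(r' * i) mod n = (r' * j) mod n"
      have "n dvd (i - j)" if le: "j \<le> i" and eq: "(r' * i) mod n = (r' * j) mod n" for i j
      proof -
        have "n dvd r' * i - r' * j" using mod_eq_dvd_iff_nat[of "r' * j" "r' * i" n] le eq by simp
        then have "n dvd r' * (i - j)" by (simp add: diff_mult_distrib2)
        then show ?thesis using cop by (metis coprime_commute coprime_dvd_mult_right_iff)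
      qed
      then show "i = j" using ij
        by (metis le_cases diff_less_mono dvd_imp_le lessThan_iff diff_is_0_eq' le_less_trans
            less_imp_diff_less neq0_conv not_less antisym)
    qed
    moreover have "(\<lambda>i. (r' * i) mod n) ` {..<n} \<subseteq> {..<n}" using n1 by auto
    ultimately show "bij_betw (\<lambda>i. (r' * i) mod n) {..<n} {..<n}"
      by (simp add: bij_betw_def endo_inj_surj)
  qed
  also have "\<dots> = b ^ (\<Sum>j<n. q ^ j)" by (simp add: power_sum)
  finally show ?thesis by (simp add: q_def)
qed

lemma norm_surj:
  fixes p h g n :: nat and y :: "'a::{field,finite}"
  assumes p: "prime p" and card: "card (UNIV :: 'a set) = p ^ h" and hg: "h = g * n"
    and g1: "g \<ge> 1" and n1: "n \<ge> 1" and y0: "y \<noteq> 0" and yfix: "y ^ (p ^ g) = y"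
  shows "\<exists>b. b ^ (\<Sum>j<n. (p ^ g) ^ j) = y"
proof -
  define q where "q = p ^ g"
  define E where "E = (\<Sum>j<n. q ^ j)"
  define Fq where "Fq = {x::'a. x ^ q = x}"
  have p2: "p \<ge> 2" using p prime_ge_2_nat by blast
  have q1: "q \<ge> 1" using p2 by (simp add: q_def)
  have cardF: "card Fq = q" unfolding Fq_def q_def by (rule card_fixq[OF p card hg g1 n1])
  have E1: "E \<ge> 1"
  proof -
    have "q ^ 0 \<le> E" unfolding E_def by (rule member_le_sum) (use n1 in auto)
    then show ?thesis by simp
  qed
  have Q: "p ^ h = q ^ n" by (simp add: q_def hg power_mult)
  have geo: "(q - 1) * E + 1 = p ^ h" using geom_nat[OF q1, of n] by (simp add: E_def Q)
  have Eq: "E * q + 1 = E + p ^ h"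
  proof -
    have "(\<Sum>j<Suc n. q ^ j) = q ^ 0 + (\<Sum>j<n. q ^ Suc j)" by (rule sum.lessThan_Suc_shift)
    moreover have "(\<Sum>j<Suc n. q ^ j) = E + q ^ n" by (simp add: E_def)
    moreover have "(\<Sum>j<n. q ^ Suc j) = E * q" unfolding E_def sum_distrib_right by (intro sum.cong refl) (simp add: mult.commute)
    ultimately show ?thesis using Q by simp
  qed
  define N where "N b = b ^ E" for b :: 'a
  define Img where "Img = N ` (UNIV - {0})"
  have fib: "card {b. N b = z} \<le> E" for z
  proof -
    define P where "P = (monom 1 E - [:z:] :: 'a poly)"
    have cP: "coeff P E = 1" using E1 by (simp add: P_def coeff_monom coeff_pCons split: nat.split)
    have P0: "P \<noteq> 0" using cP by (metis coeff_0 zero_neq_one)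
    have dP: "degree P \<le> E" unfolding P_def
      by (rule degree_diff_le) (auto simp: degree_monom_le)
    have "{b. N b = z} = {b. poly P b = 0}" by (auto simp: P_def N_def poly_monom)
    then show ?thesis using card_poly_roots_bound[OF P0] dP by simp
  qed
  have "UNIV - {0} \<subseteq> (\<Union>z\<in>Img. {b. N b = z})" by (auto simp: Img_def)
  then have "card (UNIV - {0::'a}) \<le> card (\<Union>z\<in>Img. {b. N b = z})" by (intro card_mono) auto
  also have "\<dots> \<le> (\<Sum>z\<in>Img. card {b. N b = z})" by (rule card_UN_le) simp
  also have "\<dots> \<le> card Img * E" using sum_bounded_above[of Img "\<lambda>z. card {b. N b = z}" E] fib by simp
  finally have "p ^ h - 1 \<le> card Img * E" using card by simp
  moreover have "(q - 1) * E = p ^ h - 1" using geo by simp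
  ultimately have "(q - 1) * E \<le> card Img * E" by simp
  then have cI: "q - 1 \<le> card Img" using E1 by simp
  have IF: "Img \<subseteq> Fq - {0}"
  proof
    fix z assume "z \<in> Img"
    then obtain b where b: "b \<noteq> 0" "z = b ^ E" by (auto simp: Img_def N_def)
    have "b ^ (E * q) * b = b ^ E * b"
    proof -
      have "b ^ (E * q) * b = b ^ (E * q + 1)" by simp
      also have "\<dots> = b ^ E * b ^ (p ^ h)" by (simp only: Eq power_add)
      also have "b ^ (p ^ h) = b" using ff_pow_card[of b] card by simp
      finally show ?thesis .
    qed
    then have "b ^ (E * q) = b ^ E" using b by simp
    then show "z \<in> Fq - {0}" using b by (simp add: Fq_def power_mult)
  qed
  have "0 \<in> Fq" using q1 by (simp add: Fq_def)
  then have cF0: "card (Fq - {0}) = q - 1" using cardF by simp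
  have "Img = Fq - {0}"
    by (rule card_subset_eq) (use IF cI cF0 card_mono[OF _ IF] in auto)
  moreover have "y \<in> Fq - {0}" using y0 yfix by (simp add: Fq_def q_def)
  ultimately obtain b where "y = N b" by (auto simp: Img_def)
  then show ?thesis by (auto simp: N_def E_def q_def)
qed



theorem mainTheorem17:
  fixes p h r n q :: nat and \<sigma> :: "'a::{field,finite} \<Rightarrow> 'a"
  assumes "prime p"
    and "card (UNIV :: 'a set) = p ^ h"
    and "1 \<le> r" and "r \<le> h - 1"
    and "\<sigma> = (\<lambda>k. k ^ (p ^ r))"
    and "n = h div gcd r h"
    and "q = p ^ gcd r h"
    and "n \<in> {2, 3} \<or> (prime n \<and> n dvd (q - 1))"
  shows "(\<forall>a::'a. skew_irreducible \<sigma> (monom 1 n - [:a:]) \<longleftrightarrow> a \<in> UNIV - Fix \<sigma>)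
     \<and> card {f. \<exists>a::'a. f = monom 1 n - [:a:] \<and> skew_irreducible \<sigma> f} = p ^ h - q"
proof -
  note p = assms(1) and card = assms(2) and r1 = assms(3) and rh = assms(4) and sdef = assms(5)
    and ndef = assms(6) and qdef = assms(7) and ncase = assms(8)
  define g where "g = gcd r h"
  define r' where "r' = r div g"
  have "0 < gcd r h" using r1 by (intro gcd_pos_nat[THEN iffD2]) simp
  then have g1: "g \<ge> 1" unfolding g_def by linarith
  have hg: "h = g * n" by (simp add: ndef g_def)
  have rg: "r = g * r'" by (simp add: r'_def g_def)
  have cop: "coprime r' n"
    unfolding r'_def ndef g_def using r1 by (intro div_gcd_coprime) auto
  have prime3: "prime (3::nat)"
  proof -
    have "{2..<3::nat} = {2}" by auto
    then show ?thesis by (simp add: prime_nat_iff')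
  qed
  have nprime: "prime n" using ncase prime3 by (elim disjE) auto
  have "n \<ge> 2" using nprime by (rule prime_ge_2_nat)
  then have n1: "n \<ge> 1" by linarith
  have chp: "CHAR('a) = p" by (rule ff_char[OF p card])
  have prc: "prime CHAR('a)" using chp p by simp
  have s_add: "\<sigma> (x + y) = \<sigma> x + \<sigma> y" for x y
    unfolding sdef using frob_add[OF prc, of x y r] chp by simp
  have s_mult: "\<sigma> (x * y) = \<sigma> x * \<sigma> y" for x y
    unfolding sdef by (simp add: power_mult_distrib)
  have s_one: "\<sigma> 1 = 1" unfolding sdef by simp
  have s_inj0: "\<sigma> x = 0 \<Longrightarrow> x = 0" for x unfolding sdef by simp
  have siter: "(\<sigma> ^^ i) x = x ^ (p ^ (r * i))" for i x
  proof (induction i)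
    case (Suc i)
    have "(\<sigma> ^^ Suc i) x = (x ^ (p ^ (r * i))) ^ (p ^ r)" using Suc by (simp add: sdef)
    also have "\<dots> = x ^ (p ^ (r * i) * p ^ r)" by (rule power_mult[symmetric])
    also have "p ^ (r * i) * p ^ r = p ^ (r * Suc i)" by (simp add: power_add[symmetric] algebra_simps)
    finally show ?case .
  qed simp
  have s_n: "(\<sigma> ^^ n) x = x" for x
  proof -
    have xh: "x ^ (p ^ h) = x" using ff_pow_card[of x] card by simp
    have "r * n = h * r'" using hg rg by simp
    then show ?thesis using pow_fix_iter[OF xh, of r'] by (simp add: siter)
  qed
  have sc: "skewcyc \<sigma> n"
  proof (intro skewcyc.intro skewring.intro skewcyc_axioms.intro)
    show "\<And>x y. \<sigma> (x + y) = \<sigma> x + \<sigma> y" by (rule s_add)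
    show "\<And>x y. \<sigma> (x * y) = \<sigma> x * \<sigma> y" by (rule s_mult)
    show "\<sigma> 1 = 1" by (rule s_one)
    show "\<And>x. \<sigma> x = 0 \<Longrightarrow> x = 0" by (rule s_inj0)
    show "prime n" by (rule nprime)
    show "\<And>x. (\<sigma> ^^ n) x = x" by (rule s_n)
  qed
  interpret skewcyc \<sigma> n by (rule sc)
  have FixEq: "Fix \<sigma> = {x. x ^ q = x}"
    unfolding Fix_def sdef qdef using fix_r_eq_g[OF p card r1] by simp
  have cardFix: "card (Fix \<sigma>) = q"
    unfolding FixEq qdef g_def[symmetric] by (rule card_fixq[OF p card hg g1 n1])
  have part1: "skew_irreducible \<sigma> (monom 1 n - [:a:]) \<longleftrightarrow> a \<in> UNIV - Fix \<sigma>" for a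
  proof (cases "a \<in> Fix \<sigma>")
    case False
    then have "\<sigma> a \<noteq> a" by (simp add: Fix_def)
    then show ?thesis using irred False by simp
  next
    case True
    obtain b where b: "a = (\<Prod>i<n. (\<sigma> ^^ i) b)"
    proof (cases "a = 0")
      case True
      have "(\<Prod>i<n. (\<sigma> ^^ i) (0::'a)) = 0" using n1 by (simp add: si_zero)
      then show ?thesis using that True by metis
    next
      case False
      have afix: "a ^ (p ^ g) = a" using \<open>a \<in> Fix \<sigma>\<close> by (simp add: FixEq qdef g_def)
      obtain b where "b ^ (\<Sum>j<n. (p ^ g) ^ j) = a"
        using norm_surj[OF p card hg g1 n1 False afix] by blast
      moreover have "(\<Prod>i<n. (\<sigma> ^^ i) b) = b ^ (\<Sum>j<n. (p ^ g) ^ j)"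
        using norm_pow[OF card hg cop n1, of b] by (simp add: siter rg)
      ultimately show ?thesis using that by metis
    qed
    then show ?thesis using reducible True by simp
  qed
  have setEq: "{f. \<exists>a::'a. f = monom 1 n - [:a:] \<and> skew_irreducible \<sigma> f}
      = (\<lambda>a. monom 1 n - [:a:]) ` (UNIV - Fix \<sigma>)"
    using part1 by auto
  have inj: "inj_on (\<lambda>a::'a. monom 1 n - [:a:]) (UNIV - Fix \<sigma>)"
    by (rule inj_onI) simp
  have "card {f. \<exists>a::'a. f = monom 1 n - [:a:] \<and> skew_irreducible \<sigma> f} = card (UNIV - Fix \<sigma>)"
    unfolding setEq by (rule card_image[OF inj])
  also have "\<dots> = p ^ h - q" using cardFix card by (simp add: card_Diff_subset)
  finally show ?thesis using part1 by blast
qed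

end
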